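(* (i) The collection $\mathrm{Prim}\,Mag=(\mathrm{Prim}\,Mag(n))_{n\ge1}$ is a suboperad of the operad $Mag$: it contains the identity operation and is closed under operadic composition, so that the composition $Mag\circ Mag\to Mag$ restricts to $\mathrm{Prim}\,Mag\circ\mathrm{Prim}\,Mag\to\mathrm{Prim}\,Mag$. (ii) For every $As^c$-$Mag$-bialgebra $\mathcal H$, every $p\in\mathrm{Prim}\,Mag(n)$ and all $x_1,\dots,x_n\in\mathrm{Prim}\,\mathcal H$, the element $p(x_1,\dots,x_n)$ computed with the product of $\mathcal H$ lies in $\mathrm{Prim}\,\mathcal H$; thus $\mathrm{Prim}\,\mathcal H$ is an algebra over $\mathrm{Prim}\,Mag$.
   Context: Let $\mathbb K$ be a field. An $As^c$-$Mag$-bialgebra is a vector space $\mathcal H$ with a bilinear product $\cdot$ (not assumed associative) with two-sided unit $1$ and a coassociative counital coproduct $\Delta$ with $\Delta(1)=1\otimes1$ and $\Delta(x\cdot y)=\Delta(x)\cdot(1\otimes y)+(x\otimes1)\cdot\Delta(y)-x\otimes y$, the product on $\mathcal H\otimes\mathcal H$ being componentwise; $\mathrm{Prim}\,\mathcal H$ is the set of $x$ in the kernel of the counit with $\Delta(x)=x\otimes1+1\otimes x$. $Mag$ is the operad of unital magmatic algebras: $Mag(n)=\mathbb K[Y_{n-1}]\otimes\mathbb K[S_n]$, $Y_{n-1}$ the set of planar binary rooted trees with $n$ leaves, an element $(t,\sigma)$ acting on a magmatic algebra by evaluating the bracketing $t$ on $(x_{\sigma^{-1}(1)},\dots,x_{\sigma^{-1}(n)})$.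 The free magmatic algebra $Mag(V)$ on a vector space $V$ carries the unique coproduct $\Delta$ with $\Delta(1)=1\otimes1$, $\Delta(v)=v\otimes1+1\otimes v$ ($v\in V$) satisfying the relation above, making it an $As^c$-$Mag$-bialgebra. $\mathrm{Prim}\,Mag(n)\subset Mag(n)$ is the subspace of operations $p$ such that $p(x_1,\dots,x_n)$ is primitive in $Mag(\mathbb Kx_1\oplus\dots\oplus\mathbb Kx_n)$. *)

theory Defs
  imports "HOL-Library.Poly_Mapping" "HOL-Combinatorics.Permutations"
begin

text \<open>A vector space over a field 'k with basis 'b is modelled as the space of
finitely supported functions 'b =>0 'k; the tensor product of two such spaces is
the space over the product basis.\<close>

definition sc :: "'k::field \<Rightarrow> ('b \<Rightarrow>\<^sub>0 'k) \<Rightarrow> ('b \<Rightarrow>\<^sub>0 'k)" where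
  "sc c x = Poly_Mapping.map (\<lambda>a. c * a) x"

definition bv :: "'b \<Rightarrow> ('b \<Rightarrow>\<^sub>0 'k::field)" where
  "bv b = Poly_Mapping.single b 1"

definition lin_ext :: "('b \<Rightarrow> ('c \<Rightarrow>\<^sub>0 'k::field)) \<Rightarrow> ('b \<Rightarrow>\<^sub>0 'k) \<Rightarrow> ('c \<Rightarrow>\<^sub>0 'k)" where
  "lin_ext f x = (\<Sum>b\<in>Poly_Mapping.keys x. sc (Poly_Mapping.lookup x b) (f b))"

definition tensor :: "('b \<Rightarrow>\<^sub>0 'k::field) \<Rightarrow> ('c \<Rightarrow>\<^sub>0 'k) \<Rightarrow> ('b \<times> 'c \<Rightarrow>\<^sub>0 'k)" where
  "tensor x y = (\<Sum>a\<in>Poly_Mapping.keys x. \<Sum>b\<in>Poly_Mapping.keys y. Poly_Mapping.single (a, b) (Poly_Mapping.lookup x a * Poly_Mapping.lookup y b))"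

definition tmul :: "(('b \<Rightarrow>\<^sub>0 'k::field) \<Rightarrow> ('b \<Rightarrow>\<^sub>0 'k) \<Rightarrow> ('b \<Rightarrow>\<^sub>0 'k))
    \<Rightarrow> ('b \<times> 'b \<Rightarrow>\<^sub>0 'k) \<Rightarrow> ('b \<times> 'b \<Rightarrow>\<^sub>0 'k) \<Rightarrow> ('b \<times> 'b \<Rightarrow>\<^sub>0 'k)" where
  "tmul mu T S = (\<Sum>ab\<in>Poly_Mapping.keys T. \<Sum>cd\<in>Poly_Mapping.keys S.
      sc (Poly_Mapping.lookup T ab * Poly_Mapping.lookup S cd)
         (tensor (mu (bv (fst ab)) (bv (fst cd))) (mu (bv (snd ab)) (bv (snd cd)))))"

definition is_linear :: "(('b \<Rightarrow>\<^sub>0 'k::field) \<Rightarrow> ('c \<Rightarrow>\<^sub>0 'k)) \<Rightarrow> bool" where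
  "is_linear f \<longleftrightarrow> (\<forall>x y. f (x + y) = f x + f y) \<and> (\<forall>c x. f (sc c x) = sc c (f x))"

definition is_linear_form :: "(('b \<Rightarrow>\<^sub>0 'k::field) \<Rightarrow> 'k) \<Rightarrow> bool" where
  "is_linear_form f \<longleftrightarrow> (\<forall>x y. f (x + y) = f x + f y) \<and> (\<forall>c x. f (sc c x) = c * f x)"

definition is_bilinear :: "(('b \<Rightarrow>\<^sub>0 'k::field) \<Rightarrow> ('b \<Rightarrow>\<^sub>0 'k) \<Rightarrow> ('b \<Rightarrow>\<^sub>0 'k)) \<Rightarrow> bool" where
  "is_bilinear m \<longleftrightarrow> (\<forall>x. is_linear (m x)) \<and> (\<forall>y. is_linear (\<lambda>x. m x y))"

text \<open>Coassociativity: (Delta (x) id) o Delta = (id (x) Delta) o Delta, after the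
canonical identification (H (x) H) (x) H = H (x) (H (x) H).\<close>
definition coassoc :: "(('b \<Rightarrow>\<^sub>0 'k::field) \<Rightarrow> ('b \<times> 'b \<Rightarrow>\<^sub>0 'k)) \<Rightarrow> bool" where
  "coassoc D \<longleftrightarrow> (\<forall>x.
     lin_ext (\<lambda>ab. lin_ext (\<lambda>((a1, a2), b). bv (a1, a2, b)) (tensor (D (bv (fst ab))) (bv (snd ab)))) (D x)
   = lin_ext (\<lambda>ab. tensor (bv (fst ab)) (D (bv (snd ab)))) (D x))"

definition counital :: "(('b \<Rightarrow>\<^sub>0 'k::field) \<Rightarrow> ('b \<times> 'b \<Rightarrow>\<^sub>0 'k)) \<Rightarrow> (('b \<Rightarrow>\<^sub>0 'k) \<Rightarrow> 'k) \<Rightarrow> bool" where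
  "counital D e \<longleftrightarrow> (\<forall>x.
     lin_ext (\<lambda>ab. sc (e (bv (fst ab))) (bv (snd ab))) (D x) = x \<and>
     lin_ext (\<lambda>ab. sc (e (bv (snd ab))) (bv (fst ab))) (D x) = x)"

definition asc_mag_bialgebra ::
  "(('b \<Rightarrow>\<^sub>0 'k::field) \<Rightarrow> ('b \<Rightarrow>\<^sub>0 'k) \<Rightarrow> ('b \<Rightarrow>\<^sub>0 'k)) \<Rightarrow> ('b \<Rightarrow>\<^sub>0 'k)
   \<Rightarrow> (('b \<Rightarrow>\<^sub>0 'k) \<Rightarrow> ('b \<times> 'b \<Rightarrow>\<^sub>0 'k)) \<Rightarrow> (('b \<Rightarrow>\<^sub>0 'k) \<Rightarrow> 'k) \<Rightarrow> bool" where
  "asc_mag_bialgebra mu one D e \<longleftrightarrow>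
     is_bilinear mu \<and> (\<forall>x. mu one x = x \<and> mu x one = x) \<and>
     is_linear D \<and> is_linear_form e \<and> coassoc D \<and> counital D e \<and>
     D one = tensor one one \<and>
     (\<forall>x y. D (mu x y) = tmul mu (D x) (tensor one y) + tmul mu (tensor x one) (D y) - tensor x y)"

definition is_prim :: "(('b \<Rightarrow>\<^sub>0 'k::field) \<Rightarrow> ('b \<times> 'b \<Rightarrow>\<^sub>0 'k)) \<Rightarrow> (('b \<Rightarrow>\<^sub>0 'k) \<Rightarrow> 'k)
   \<Rightarrow> ('b \<Rightarrow>\<^sub>0 'k) \<Rightarrow> ('b \<Rightarrow>\<^sub>0 'k) \<Rightarrow> bool" where
  "is_prim D e one x \<longleftrightarrow> e x = 0 \<and> D x = tensor x one + tensor one x"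

text \<open>Basis of Mag(V) for V with basis 'a: the unit (None) and the nonassociative
monomials (bracketed words) in the letters 'a.\<close>
datatype 'a bt = L 'a | N "'a bt" "'a bt"

fun bmul :: "'a bt option \<Rightarrow> 'a bt option \<Rightarrow> 'a bt option" where
  "bmul None y = y"
| "bmul (Some u) None = Some u"
| "bmul (Some u) (Some v) = Some (N u v)"

definition fmul :: "('a bt option \<Rightarrow>\<^sub>0 'k::field) \<Rightarrow> ('a bt option \<Rightarrow>\<^sub>0 'k) \<Rightarrow> ('a bt option \<Rightarrow>\<^sub>0 'k)" where
  "fmul x y = (\<Sum>a\<in>Poly_Mapping.keys x. \<Sum>b\<in>Poly_Mapping.keys y. Poly_Mapping.single (bmul a b) (Poly_Mapping.lookup x a * Poly_Mapping.lookup y b))"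

definition fone :: "('a bt option \<Rightarrow>\<^sub>0 'k::field)" where
  "fone = bv None"

definition fgen :: "'a \<Rightarrow> ('a bt option \<Rightarrow>\<^sub>0 'k::field)" where
  "fgen a = bv (Some (L a))"

fun fcop_bt :: "'a bt \<Rightarrow> ('a bt option \<times> 'a bt option \<Rightarrow>\<^sub>0 'k::field)" where
  "fcop_bt (L a) = tensor (bv (Some (L a))) fone + tensor fone (bv (Some (L a)))"
| "fcop_bt (N u v) =
     tmul fmul (fcop_bt u) (tensor fone (bv (Some v)))
   + tmul fmul (tensor (bv (Some u)) fone) (fcop_bt v)
   - tensor (bv (Some u)) (bv (Some v))"

definition fcop :: "('a bt option \<Rightarrow>\<^sub>0 'k::field) \<Rightarrow> ('a bt option \<times> 'a bt option \<Rightarrow>\<^sub>0 'k)" where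
  "fcop = lin_ext (\<lambda>w. case w of None \<Rightarrow> tensor fone fone | Some u \<Rightarrow> fcop_bt u)"

definition fcounit :: "('a bt option \<Rightarrow>\<^sub>0 'k::field) \<Rightarrow> 'k" where
  "fcounit x = Poly_Mapping.lookup x None"

text \<open>Planar binary rooted trees; Y_{n-1} = trees with n leaves.\<close>
datatype tree = Leaf | Node tree tree

fun nleaves :: "tree \<Rightarrow> nat" where
  "nleaves Leaf = 1"
| "nleaves (Node l r) = nleaves l + nleaves r"

fun eval_tree :: "('v \<Rightarrow> 'v \<Rightarrow> 'v) \<Rightarrow> tree \<Rightarrow> 'v list \<Rightarrow> 'v" where
  "eval_tree m Leaf xs = hd xs"
| "eval_tree m (Node l r) xs =
     m (eval_tree m l (take (nleaves l) xs)) (eval_tree m r (drop (nleaves l) xs))"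

definition mag_basis :: "nat \<Rightarrow> (tree \<times> (nat \<Rightarrow> nat)) set" where
  "mag_basis n = {(t, \<sigma>). nleaves t = n \<and> \<sigma> permutes {1..n}}"

text \<open>Mag(n) = K[Y_{n-1}] (x) K[S_n], with basis the pairs (t, sigma).\<close>
definition Mag :: "nat \<Rightarrow> ((tree \<times> (nat \<Rightarrow> nat)) \<Rightarrow>\<^sub>0 'k::field) set" where
  "Mag n = {p. Poly_Mapping.keys p \<subseteq> mag_basis n}"

definition op_eval :: "(('b \<Rightarrow>\<^sub>0 'k::field) \<Rightarrow> ('b \<Rightarrow>\<^sub>0 'k) \<Rightarrow> ('b \<Rightarrow>\<^sub>0 'k))
    \<Rightarrow> ((tree \<times> (nat \<Rightarrow> nat)) \<Rightarrow>\<^sub>0 'k) \<Rightarrow> (nat \<Rightarrow> ('b \<Rightarrow>\<^sub>0 'k)) \<Rightarrow> ('b \<Rightarrow>\<^sub>0 'k)" where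
  "op_eval m p x = (\<Sum>ts\<in>Poly_Mapping.keys p. sc (Poly_Mapping.lookup p ts)
      (eval_tree m (fst ts) (map (\<lambda>j. x (inv (snd ts) j)) [1..<nleaves (fst ts) + 1])))"

definition PrimMag :: "nat \<Rightarrow> ((tree \<times> (nat \<Rightarrow> nat)) \<Rightarrow>\<^sub>0 'k::field) set" where
  "PrimMag n = {p \<in> Mag n. is_prim fcop fcounit fone (op_eval fmul p (\<lambda>i. fgen i))}"

definition mag_id :: "(tree \<times> (nat \<Rightarrow> nat)) \<Rightarrow>\<^sub>0 'k::field" where
  "mag_id = bv (Leaf, id)"

text \<open>Reading a multilinear monomial back as a basis element (t, sigma) of Mag(M):
t is its bracketing and the letters, read left to right, are
sigma^-1(1), ..., sigma^-1(M).\<close>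
fun leaves :: "'a bt \<Rightarrow> 'a list" where
  "leaves (L a) = [a]"
| "leaves (N u v) = leaves u @ leaves v"

fun shape :: "'a bt \<Rightarrow> tree" where
  "shape (L a) = Leaf"
| "shape (N u v) = Node (shape u) (shape v)"

definition op_of_word :: "nat bt \<Rightarrow> tree \<times> (nat \<Rightarrow> nat)" where
  "op_of_word w = (shape w,
     inv (\<lambda>j. if j \<in> {1..length (leaves w)} then leaves w ! (j - 1) else j))"

definition to_op :: "(nat bt option \<Rightarrow>\<^sub>0 'k::field) \<Rightarrow> ((tree \<times> (nat \<Rightarrow> nat)) \<Rightarrow>\<^sub>0 'k)" where
  "to_op f = (\<Sum>w\<in>Poly_Mapping.keys f. case w of None \<Rightarrow> 0
                 | Some u \<Rightarrow> Poly_Mapping.single (op_of_word u) (Poly_Mapping.lookup f w))"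

text \<open>Operadic composition gamma(p; q_1, ..., q_n) for p in Mag(n), q_i in Mag(m_i):
the operation (x_1, ..., x_M) |-> p(q_1(x_1, ..., x_{m_1}), q_2(x_{m_1+1}, ...), ...),
M = m_1 + ... + m_n, computed in the free magmatic algebra and read back in Mag(M).\<close>
definition mag_comp :: "((tree \<times> (nat \<Rightarrow> nat)) \<Rightarrow>\<^sub>0 'k::field) \<Rightarrow> (nat \<Rightarrow> nat)
    \<Rightarrow> (nat \<Rightarrow> ((tree \<times> (nat \<Rightarrow> nat)) \<Rightarrow>\<^sub>0 'k)) \<Rightarrow> ((tree \<times> (nat \<Rightarrow> nat)) \<Rightarrow>\<^sub>0 'k)" where
  "mag_comp p m q = to_op (op_eval fmul p
      (\<lambda>i. op_eval fmul (q i) (\<lambda>j. fgen (sum m {1..<i} + j))))"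

end

theory Submission
  imports Defs "HOL-Library.Multiset"
begin


lemma lookup_sc[simp]: "Poly_Mapping.lookup (sc c x) b = c * Poly_Mapping.lookup x b"
  by (simp add: sc_def map.rep_eq when_def)

lemma sc_add[simp]: "sc c (x + y) = sc c x + sc c y"
  by (rule poly_mapping_eqI) (simp add: lookup_add algebra_simps)
lemma sc_add2: "sc (a + b) x = sc a x + sc b x"
  by (rule poly_mapping_eqI) (simp add: lookup_add algebra_simps)
lemma sc_diff[simp]: "sc c (x - y) = sc c x - sc c y"
  by (rule poly_mapping_eqI) (simp add: lookup_minus algebra_simps)
lemma sc_zero[simp]: "sc c 0 = 0" by (rule poly_mapping_eqI) simp
lemma sc_zero2[simp]: "sc 0 x = 0" by (rule poly_mapping_eqI) simp
lemma sc_one[simp]: "sc 1 x = x" by (rule poly_mapping_eqI) simp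
lemma sc_sc[simp]: "sc a (sc b x) = sc (a * b) x" by (rule poly_mapping_eqI) simp
lemma sc_sum: "sc c (sum f A) = (\<Sum>a\<in>A. sc c (f a))"
  by (rule poly_mapping_eqI) (simp add: lookup_sum sum_distrib_left)
lemma single_sc: "Poly_Mapping.single b c = sc c (bv b)"
  by (rule poly_mapping_eqI) (simp add: bv_def lookup_single when_def)
lemma bv_neq0[simp]: "bv b \<noteq> (0 :: _ \<Rightarrow>\<^sub>0 'k::field)"
  by (metis bv_def lookup_single_eq lookup_zero one_neq_zero)

lemma lin_ext_superset:
  assumes "finite S" "Poly_Mapping.keys x \<subseteq> S"
  shows "lin_ext f x = (\<Sum>b\<in>S. sc (Poly_Mapping.lookup x b) (f b))"
  unfolding lin_ext_def
  by (rule sum.mono_neutral_left) (use assms in \<open>auto simp: in_keys_iff\<close>)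

lemma lin_ext_add[simp]: "lin_ext f (x + y) = lin_ext f x + lin_ext f y"
proof -
  let ?S = "Poly_Mapping.keys x \<union> Poly_Mapping.keys y"
  have "lin_ext f (x + y) = (\<Sum>b\<in>?S. sc (Poly_Mapping.lookup (x+y) b) (f b))"
    by (rule lin_ext_superset) (auto dest: keys_add[THEN subsetD])
  also have "\<dots> = (\<Sum>b\<in>?S. sc (Poly_Mapping.lookup x b) (f b)) + (\<Sum>b\<in>?S. sc (Poly_Mapping.lookup y b) (f b))"
    by (simp add: lookup_add sc_add2 sum.distrib)
  also have "\<dots> = lin_ext f x + lin_ext f y"
    by (subst (1 2) lin_ext_superset[of ?S]) auto
  finally show ?thesis .
qed

lemma lin_ext_sc[simp]: "lin_ext f (sc c x) = sc c (lin_ext f x)"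
proof -
  have "lin_ext f (sc c x) = (\<Sum>b\<in>Poly_Mapping.keys x. sc (Poly_Mapping.lookup (sc c x) b) (f b))"
    by (rule lin_ext_superset) (auto simp: in_keys_iff)
  then show ?thesis by (simp add: lin_ext_def sc_sum)
qed

lemma lin_ext_zero[simp]: "lin_ext f 0 = 0" by (simp add: lin_ext_def)

lemma lin_ext_bv[simp]: "lin_ext f (bv b) = f b"
  by (simp add: lin_ext_def bv_def)

lemma lin_ext_linear: "is_linear (lin_ext f)"
  by (simp add: is_linear_def)

lemma linear_zero: "is_linear g \<Longrightarrow> g 0 = 0"
proof -
  assume "is_linear g"
  then have "g (0 + 0) = g 0 + g 0" unfolding is_linear_def by blast
  then show ?thesis by simp
qed

lemma linear_sum: "is_linear g \<Longrightarrow> g (sum f A) = (\<Sum>a\<in>A. g (f a))"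
  by (induction A rule: infinite_finite_induct) (auto simp: linear_zero is_linear_def)

lemma linear_diff: "is_linear g \<Longrightarrow> g (x - y) = g x - g y"
proof -
  assume "is_linear g"
  then have "g (x - y + y) = g (x - y) + g y" unfolding is_linear_def by blast
  then show ?thesis by (simp add: algebra_simps)
qed

lemma mult_ifz: "(a::'k::field) * (if P then 1 else 0) = (if P then a else 0)" by simp

lemma expand: "x = (\<Sum>b\<in>Poly_Mapping.keys x. sc (Poly_Mapping.lookup x b) (bv b))"
proof (rule poly_mapping_eqI)
  fix k show "Poly_Mapping.lookup x k = Poly_Mapping.lookup (\<Sum>b\<in>Poly_Mapping.keys x. sc (Poly_Mapping.lookup x b) (bv b)) k"
  proof -
    have "Poly_Mapping.lookup (\<Sum>b\<in>Poly_Mapping.keys x. sc (Poly_Mapping.lookup x b) (bv b)) k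
        = (\<Sum>b\<in>Poly_Mapping.keys x. (if b = k then Poly_Mapping.lookup x b else 0))"
      by (simp add: lookup_sum bv_def lookup_single when_def mult_ifz)
    also have "\<dots> = Poly_Mapping.lookup x k"
      by (simp add: sum.delta' in_keys_iff)
    finally show ?thesis by simp
  qed
qed

lemma lin_ext_bv_id[simp]: "lin_ext bv x = x"
  using expand[of x] by (simp add: lin_ext_def)

lemma linear_rep: "is_linear g \<Longrightarrow> g x = lin_ext (\<lambda>b. g (bv b)) x"
  by (subst expand) (simp add: linear_sum lin_ext_def is_linear_def)

lemma linear_unique: "is_linear f \<Longrightarrow> is_linear g \<Longrightarrow> (\<And>b. f (bv b) = g (bv b)) \<Longrightarrow> f x = g x"
proof -
  assume a: "is_linear f" "is_linear g" "\<And>b. f (bv b) = g (bv b)"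
  have "f x = lin_ext (\<lambda>b. f (bv b)) x" by (rule linear_rep[OF a(1)])
  also have "\<dots> = lin_ext (\<lambda>b. g (bv b)) x" using a(3) by simp
  also have "\<dots> = g x" by (rule linear_rep[OF a(2), symmetric])
  finally show ?thesis .
qed

lemma lin_ext_cong: "(\<And>b. b \<in> Poly_Mapping.keys x \<Longrightarrow> f b = g b) \<Longrightarrow> lin_ext f x = lin_ext g x"
  by (simp add: lin_ext_def)

lemma lin_ext_fadd: "lin_ext (\<lambda>b. f b + g b) x = lin_ext f x + lin_ext g x"
  by (simp add: lin_ext_def sum.distrib)
lemma lin_ext_fsc: "lin_ext (\<lambda>b. sc c (f b)) x = sc c (lin_ext f x)"
  by (simp add: lin_ext_def sc_sum mult.commute)

lemma linear_comp: "is_linear f \<Longrightarrow> is_linear g \<Longrightarrow> is_linear (\<lambda>x. f (g x))"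
  by (simp add: is_linear_def)
lemma linear_add: "is_linear f \<Longrightarrow> is_linear g \<Longrightarrow> is_linear (\<lambda>x. f x + g x)"
  by (simp add: is_linear_def)
lemma linear_minus: "is_linear f \<Longrightarrow> is_linear g \<Longrightarrow> is_linear (\<lambda>x. f x - g x)"
  by (simp add: is_linear_def)
lemma linear_id: "is_linear (\<lambda>x. x)" by (simp add: is_linear_def)
lemma linear_const0: "is_linear (\<lambda>x. 0)" by (simp add: is_linear_def)

lemma lin_ext_comp: "lin_ext f (lin_ext g x) = lin_ext (\<lambda>b. lin_ext f (g b)) x"
proof -
  have "lin_ext f (lin_ext g x) = (\<Sum>b\<in>Poly_Mapping.keys x. lin_ext f (sc (Poly_Mapping.lookup x b) (g b)))"
    by (simp only: lin_ext_def[of g] linear_sum[OF lin_ext_linear])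
  then show ?thesis by (simp add: lin_ext_def[of "\<lambda>b. lin_ext f (g b)"])
qed

definition B2 :: "('a \<Rightarrow> 'b \<Rightarrow> ('c \<Rightarrow>\<^sub>0 'k::field)) \<Rightarrow> ('a \<Rightarrow>\<^sub>0 'k) \<Rightarrow> ('b \<Rightarrow>\<^sub>0 'k) \<Rightarrow> ('c \<Rightarrow>\<^sub>0 'k)" where
  "B2 g x y = lin_ext (\<lambda>a. lin_ext (\<lambda>b. g a b) y) x"

lemma B2_bilinear: "is_bilinear (B2 g)"
  unfolding is_bilinear_def is_linear_def B2_def
  by (simp add: lin_ext_fadd lin_ext_fsc)

lemma B2_bv[simp]: "B2 g (bv a) (bv b) = g a b" by (simp add: B2_def)

lemma double_sum_B2:
  "(\<Sum>a\<in>Poly_Mapping.keys x. \<Sum>b\<in>Poly_Mapping.keys y. Poly_Mapping.single (h a b) (Poly_Mapping.lookup x a * Poly_Mapping.lookup y b))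
   = B2 (\<lambda>a b. bv (h a b)) x y"
  by (simp add: B2_def lin_ext_def single_sc sc_sum mult.commute)

lemma tensor_B2: "tensor = B2 (\<lambda>a b. bv (a, b))"
  by (intro ext) (simp add: tensor_def double_sum_B2)

lemma fmul_B2: "fmul = B2 (\<lambda>a b. bv (bmul a b))"
  by (intro ext) (simp add: fmul_def double_sum_B2)

lemma tmul_B2: "tmul mu = B2 (\<lambda>ab cd. tensor (mu (bv (fst ab)) (bv (fst cd))) (mu (bv (snd ab)) (bv (snd cd))))"
  by (intro ext) (simp add: tmul_def B2_def lin_ext_def sc_sum mult.commute)




lemma B2_lin1: "is_linear (\<lambda>x. B2 g x y)" unfolding is_linear_def B2_def by simp
lemma B2_lin2: "is_linear (B2 g x)" unfolding is_linear_def B2_def by (simp add: lin_ext_fadd lin_ext_fsc)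

lemma tensor_lin1: "is_linear (\<lambda>x. tensor x y)" by (simp add: tensor_B2 B2_lin1)
lemma tensor_lin2: "is_linear (tensor x)" by (simp add: tensor_B2 B2_lin2)
lemma fmul_lin1: "is_linear (\<lambda>x. fmul x y)" by (simp add: fmul_B2 B2_lin1)
lemma fmul_lin2: "is_linear (fmul x)" by (simp add: fmul_B2 B2_lin2)
lemma tmul_lin1: "is_linear (\<lambda>x. tmul mu x y)" by (simp add: tmul_B2 B2_lin1)
lemma tmul_lin2: "is_linear (tmul mu x)" by (simp add: tmul_B2 B2_lin2)

lemma tensor_bv[simp]: "tensor (bv a) (bv b) = bv (a, b)" by (simp add: tensor_B2)
lemma fmul_bv[simp]: "fmul (bv a) (bv b) = bv (bmul a b)" by (simp add: fmul_B2)
lemma tmul_bv: "tmul mu (bv ab) (bv cd) = tensor (mu (bv (fst ab)) (bv (fst cd))) (mu (bv (snd ab)) (bv (snd cd)))"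
  by (simp add: tmul_B2)

lemma bilin_unique:
  assumes "\<And>x. is_linear (f x)" "\<And>y. is_linear (\<lambda>x. f x y)"
    "\<And>x. is_linear (g x)" "\<And>y. is_linear (\<lambda>x. g x y)"
    "\<And>a b. f (bv a) (bv b) = g (bv a) (bv b)"
  shows "f x y = g x y"
proof -
  have 1: "f (bv a) y = g (bv a) y" for a
    by (rule linear_unique[OF assms(1) assms(3)]) (simp add: assms(5))
  show ?thesis
    by (rule linear_unique[OF assms(2) assms(4)]) (simp add: 1)
qed

lemma bil_lin1: "is_bilinear mu \<Longrightarrow> is_linear (\<lambda>x. mu x y)" unfolding is_bilinear_def by blast
lemma bil_lin2: "is_bilinear mu \<Longrightarrow> is_linear (mu x)" unfolding is_bilinear_def by blast

lemma tmul_pure: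
  assumes mu: "is_bilinear mu"
  shows "tmul mu (tensor A B) (tensor C E) = tensor (mu A C) (mu B E)"
proof -
  have step: "tmul mu (tensor (bv a) B) (tensor (bv c) E) = tensor (mu (bv a) (bv c)) (mu B E)" for a c
    by (rule bilin_unique[where f="\<lambda>B E. tmul mu (tensor (bv a) B) (tensor (bv c) E)"
                          and g="\<lambda>B E. tensor (mu (bv a) (bv c)) (mu B E)"])
       (auto intro!: linear_comp[OF tmul_lin2] linear_comp[OF tensor_lin2] linear_comp[OF tmul_lin1 tensor_lin2]
          linear_comp[OF tensor_lin2 bil_lin2[OF mu]] linear_comp[OF tensor_lin2 bil_lin1[OF mu]]
          simp: tmul_bv linear_id)
  show ?thesis
    by (rule bilin_unique[where f="\<lambda>A C. tmul mu (tensor A B) (tensor C E)"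
                          and g="\<lambda>A C. tensor (mu A C) (mu B E)"])
       (auto intro!: linear_comp[OF tmul_lin2 tensor_lin1] linear_comp[OF tmul_lin1 tensor_lin1]
          linear_comp[OF tensor_lin1 bil_lin2[OF mu]] linear_comp[OF tensor_lin1 bil_lin1[OF mu]]
          simp: step linear_id)
qed

lemma tmul_unit_l:
  assumes mu: "is_bilinear mu" and u: "\<And>x. mu one x = x"
  shows "tmul mu (tensor one one) T = T"
  by (rule linear_unique[OF tmul_lin2 linear_id])
     (metis tensor_bv prod.collapse tmul_pure[OF mu] u)

lemma tmul_unit_r:
  assumes mu: "is_bilinear mu" and u: "\<And>x. mu x one = x"
  shows "tmul mu T (tensor one one) = T"
  by (rule linear_unique[OF tmul_lin1 linear_id])
     (metis tensor_bv prod.collapse tmul_pure[OF mu] u)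




fun evw :: "(nat \<Rightarrow> 'h) \<Rightarrow> ('h \<Rightarrow> 'h \<Rightarrow> 'h) \<Rightarrow> nat bt \<Rightarrow> 'h" where
  "evw x mu (L a) = x a"
| "evw x mu (N u v) = mu (evw x mu u) (evw x mu v)"

definition phi :: "(nat \<Rightarrow> 'h) \<Rightarrow> ('h \<Rightarrow> 'h \<Rightarrow> 'h) \<Rightarrow> 'h \<Rightarrow> nat bt option \<Rightarrow> 'h" where
  "phi x mu one w = (case w of None \<Rightarrow> one | Some u \<Rightarrow> evw x mu u)"

locale hb =
  fixes mu :: "('b \<Rightarrow>\<^sub>0 'k::field) \<Rightarrow> ('b \<Rightarrow>\<^sub>0 'k) \<Rightarrow> ('b \<Rightarrow>\<^sub>0 'k)"
    and one :: "'b \<Rightarrow>\<^sub>0 'k" and D :: "('b \<Rightarrow>\<^sub>0 'k) \<Rightarrow> ('b \<times> 'b \<Rightarrow>\<^sub>0 'k)"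
  assumes bil: "is_bilinear mu" and ul: "\<And>x. mu one x = x" and ur: "\<And>x. mu x one = x"
    and Dlin: "is_linear D" and Done: "D one = tensor one one"
    and rel: "\<And>x y. D (mu x y) = tmul mu (D x) (tensor one y) + tmul mu (tensor x one) (D y) - tensor x y"
begin

context fixes x :: "nat \<Rightarrow> ('b \<Rightarrow>\<^sub>0 'k)"
begin

definition ph where "ph = phi x mu one"
definition Ph where "Ph = lin_ext ph"
definition Ph2 where "Ph2 = lin_ext (\<lambda>ab. tensor (ph (fst ab)) (ph (snd ab)))"

lemma ph_bmul: "ph (bmul a b) = mu (ph a) (ph b)"
  by (cases a; cases b) (simp_all add: ph_def phi_def ul ur)

lemma Ph_bv[simp]: "Ph (bv a) = ph a" by (simp add: Ph_def)
lemma Ph2_bv[simp]: "Ph2 (bv a) = tensor (ph (fst a)) (ph (snd a))" by (simp add: Ph2_def)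
lemma Ph_lin: "is_linear Ph" by (simp add: Ph_def lin_ext_linear)
lemma Ph2_lin: "is_linear Ph2" by (simp add: Ph2_def lin_ext_linear)

lemma Ph_fmul: "Ph (fmul X Y) = mu (Ph X) (Ph Y)"
  by (rule bilin_unique[where f="\<lambda>X Y. Ph (fmul X Y)" and g="\<lambda>X Y. mu (Ph X) (Ph Y)"])
     (auto intro!: linear_comp[OF Ph_lin fmul_lin1] linear_comp[OF Ph_lin fmul_lin2]
        linear_comp[OF bil_lin2[OF bil] Ph_lin] linear_comp[OF bil_lin1[OF bil] Ph_lin]
        simp: ph_bmul)

lemma Ph2_tensor: "Ph2 (tensor X Y) = tensor (Ph X) (Ph Y)"
  by (rule bilin_unique[where f="\<lambda>X Y. Ph2 (tensor X Y)" and g="\<lambda>X Y. tensor (Ph X) (Ph Y)"])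
     (auto intro!: linear_comp[OF Ph2_lin tensor_lin1] linear_comp[OF Ph2_lin tensor_lin2]
        linear_comp[OF tensor_lin2 Ph_lin] linear_comp[OF tensor_lin1 Ph_lin])

lemma Ph2_tmul: "Ph2 (tmul fmul T S) = tmul mu (Ph2 T) (Ph2 S)"
proof (rule bilin_unique[where f="\<lambda>T S. Ph2 (tmul fmul T S)" and g="\<lambda>T S. tmul mu (Ph2 T) (Ph2 S)"])
  fix a b :: "nat bt option \<times> nat bt option"
  show "Ph2 (tmul fmul (bv a) (bv b)) = tmul mu (Ph2 (bv a)) (Ph2 (bv b))"
    by (simp add: tmul_bv Ph2_tensor tmul_pure[OF bil] ph_bmul)
qed (auto intro!: linear_comp[OF Ph2_lin tmul_lin1] linear_comp[OF Ph2_lin tmul_lin2]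
        linear_comp[OF tmul_lin2 Ph2_lin] linear_comp[OF tmul_lin1 Ph2_lin])

lemma Ph_fone[simp]: "Ph fone = one" by (simp add: fone_def ph_def phi_def)

lemma D_evw:
  assumes prim: "\<And>i. D (x i) = tensor (x i) one + tensor one (x i)"
  shows "D (ph (Some u)) = Ph2 (fcop_bt u)"
proof (induction u)
  case (L a)
  then show ?case
    by (simp add: prim Ph2_tensor linear_sum[OF Ph2_lin] Ph2_lin[unfolded is_linear_def] ph_def phi_def)
next
  case (N u v)
  have e: "ph (Some (N u v)) = mu (ph (Some u)) (ph (Some v))" by (simp add: ph_def phi_def)
  show ?case
    unfolding e rel fcop_bt.simps linear_diff[OF Ph2_lin]
    by (simp add: Ph2_lin[unfolded is_linear_def] Ph2_tmul Ph2_tensor N[symmetric])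
qed

lemma D_Ph:
  assumes prim: "\<And>i. D (x i) = tensor (x i) one + tensor one (x i)"
  shows "D (Ph X) = Ph2 (fcop X)"
proof (rule linear_unique[where f="\<lambda>X. D (Ph X)" and g="\<lambda>X. Ph2 (fcop X)"])
  fix b :: "nat bt option"
  show "D (Ph (bv b)) = Ph2 (fcop (bv b))"
  proof (cases b)
    case None then show ?thesis by (simp add: fcop_def Done fone_def ph_def phi_def)
  next
    case (Some u) then show ?thesis by (simp add: fcop_def D_evw[OF prim])
  qed
qed (auto intro!: linear_comp[OF Dlin Ph_lin] linear_comp[OF Ph2_lin] simp: fcop_def lin_ext_linear)

end
end




lemma nleaves_pos: "nleaves t \<ge> 1" by (induction t) auto

lemma op_eval_cong:
  assumes "\<And>ts j. ts \<in> Poly_Mapping.keys p \<Longrightarrow> j \<in> {1..nleaves (fst ts)} \<Longrightarrow> x (inv (snd ts) j) = y (inv (snd ts) j)"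
  shows "op_eval m p x = op_eval m p y"
  unfolding op_eval_def
proof (rule sum.cong[OF refl])
  fix ts assume "ts \<in> Poly_Mapping.keys p"
  then have "map (\<lambda>j. x (inv (snd ts) j)) [1..<nleaves (fst ts) + 1] = map (\<lambda>j. y (inv (snd ts) j)) [1..<nleaves (fst ts) + 1]"
    using assms[of ts] by (intro map_cong) auto
  then show "sc (Poly_Mapping.lookup p ts) (eval_tree m (fst ts) (map (\<lambda>j. x (inv (snd ts) j)) [1..<nleaves (fst ts) + 1])) =
         sc (Poly_Mapping.lookup p ts) (eval_tree m (fst ts) (map (\<lambda>j. y (inv (snd ts) j)) [1..<nleaves (fst ts) + 1]))"
    by (simp only:)
qed

lemma op_eval_Mag_cong:
  assumes "p \<in> Mag n" "\<And>i. i \<in> {1..n} \<Longrightarrow> x i = y i"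
  shows "op_eval m p x = op_eval m p y"
proof (rule op_eval_cong)
  fix ts j assume ts: "ts \<in> Poly_Mapping.keys p" and j: "j \<in> {1..nleaves (fst ts)}"
  then have "nleaves (fst ts) = n" "snd ts permutes {1..n}"
    using assms(1) by (auto simp: Mag_def mag_basis_def)
  then have pi: "inv (snd ts) permutes {1..n}" by (simp add: permutes_inv)
  have "j \<in> {1..n}" using j \<open>nleaves (fst ts) = n\<close> by simp
  then have "inv (snd ts) j \<in> {1..n}" using permutes_in_image[OF pi, of j] by blast
  then show "x (inv (snd ts) j) = y (inv (snd ts) j)" using assms(2) by blast
qed

context hb begin

lemma Ph_eval_tree:
  "length xs \<ge> nleaves t \<Longrightarrow> Ph x (eval_tree fmul t xs) = eval_tree mu t (map (Ph x) xs)"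
proof (induction t arbitrary: xs)
  case Leaf
  then show ?case by (cases xs) auto
next
  case (Node l r)
  then show ?case by (simp add: Ph_fmul take_map drop_map)
qed

lemma Ph_op_eval: "Ph x (op_eval fmul p X) = op_eval mu p (\<lambda>i. Ph x (X i))"
  unfolding op_eval_def
  by (simp add: linear_sum[OF Ph_lin] Ph_lin[unfolded is_linear_def] Ph_eval_tree o_def)

lemma D_zero: "D 0 = 0" by (rule linear_zero[OF Dlin])

lemma G:
  assumes pM: "p \<in> Mag n"
    and P: "fcop (op_eval fmul p fgen) = tensor (op_eval fmul p fgen) fone + tensor fone (op_eval fmul p fgen)"
    and prim: "\<And>i. i \<in> {1..n} \<Longrightarrow> D (x i) = tensor (x i) one + tensor one (x i)"
  shows "D (op_eval mu p x) = tensor (op_eval mu p x) one + tensor one (op_eval mu p x)"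
proof -
  define x' where "x' i = (if i \<in> {1..n} then x i else 0)" for i
  have prim': "D (x' i) = tensor (x' i) one + tensor one (x' i)" for i
    by (simp add: x'_def prim D_zero linear_zero[OF tensor_lin1] linear_zero[OF tensor_lin2])
  have "op_eval mu p x = op_eval mu p x'"
    by (rule op_eval_Mag_cong[OF pM]) (simp add: x'_def)
  also have "\<dots> = op_eval mu p (\<lambda>i. Ph x' (fgen i))"
    by (simp add: fgen_def ph_def phi_def)
  also have "\<dots> = Ph x' (op_eval fmul p fgen)"
    by (simp add: Ph_op_eval)
  finally have e: "op_eval mu p x = Ph x' (op_eval fmul p fgen)" .
  show ?thesis
    unfolding e D_Ph[OF prim'] P
    by (simp add: Ph2_lin[unfolded is_linear_def] Ph2_tensor)
qed

end



lemma fcop_lin: "is_linear fcop" by (simp add: fcop_def lin_ext_linear)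
lemma fcop_Some[simp]: "fcop (bv (Some u)) = fcop_bt u" by (simp add: fcop_def)
lemma fcop_fone[simp]: "fcop fone = tensor fone fone" by (simp add: fcop_def fone_def)

lemma fmul_ul: "fmul fone x = x"
  by (rule linear_unique[OF fmul_lin2 linear_id]) (simp add: fone_def)
lemma fmul_ur: "fmul x fone = x"
  by (rule linear_unique[OF fmul_lin1 linear_id]) (simp add: fone_def, metis bmul.simps(1,2) not_Some_eq)

lemma fmul_bil: "is_bilinear fmul" by (simp add: is_bilinear_def fmul_lin1 fmul_lin2)

lemma fcop_rel_bv: "fcop (fmul (bv a) (bv b)) =
        tmul fmul (fcop (bv a)) (tensor fone (bv b)) + tmul fmul (tensor (bv a) fone) (fcop (bv b)) - tensor (bv a) (bv b)"
proof -
  have ul: "tmul fmul (tensor fone fone) T = T" for T by (rule tmul_unit_l[OF fmul_bil fmul_ul])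
  have ur: "tmul fmul T (tensor fone fone) = T" for T by (rule tmul_unit_r[OF fmul_bil fmul_ur])
  show ?thesis
  proof (cases a)
    case None
    then have a: "bv a = fone" by (simp add: fone_def)
    show ?thesis
    proof (cases b)
      case None
      then have b: "bv b = fone" by (simp add: fone_def)
      show ?thesis unfolding a b by (simp add: fmul_ul ul)
    next
      case (Some v)
      show ?thesis unfolding a by (simp add: fmul_ul ul Some tmul_pure[OF fmul_bil])
    qed
  next
    case (Some u)
    show ?thesis
    proof (cases b)
      case None
      then have b: "bv b = fone" by (simp add: fone_def)
      show ?thesis unfolding b by (simp add: fmul_ur ur Some tmul_pure[OF fmul_bil])
    next
      case (Some v)
      show ?thesis using \<open>a = Some u\<close> Some by simp
    qed
  qed
qed

lemma fcop_rel: "fcop (fmul X Y) = tmul fmul (fcop X) (tensor fone Y) + tmul fmul (tensor X fone) (fcop Y) - tensor X Y"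
  by (rule bilin_unique[where f="\<lambda>X Y. fcop (fmul X Y)" and
      g="\<lambda>X Y. tmul fmul (fcop X) (tensor fone Y) + tmul fmul (tensor X fone) (fcop Y) - tensor X Y"],
   (auto intro!: linear_minus linear_add linear_comp[OF fcop_lin fmul_lin1] linear_comp[OF fcop_lin fmul_lin2]
   linear_comp[OF tmul_lin1 fcop_lin] linear_comp[OF tmul_lin1 tensor_lin1]
   linear_comp[OF tmul_lin2 fcop_lin] linear_comp[OF tmul_lin2 tensor_lin2] tensor_lin1 tensor_lin2)[4], rule fcop_rel_bv)

interpretation F: hb fmul fone fcop
  by unfold_locales (auto simp: fmul_bil fmul_ul fmul_ur fcop_lin fcop_rel)

lemma fcop_fgen: "fcop (fgen a) = tensor (fgen a) fone + tensor fone (fgen a)"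
  by (simp add: fgen_def)




definition MS :: "nat multiset \<Rightarrow> (nat bt option \<Rightarrow>\<^sub>0 'k::field) \<Rightarrow> bool" where
  "MS A X \<longleftrightarrow> (\<forall>w\<in>Poly_Mapping.keys X. \<exists>u. w = Some u \<and> mset (leaves u) = A)"

lemma MS_zero[simp]: "MS A 0" by (simp add: MS_def)
lemma MS_add: assumes "MS A X" "MS A Y" shows "MS A (X + Y)"
  unfolding MS_def
proof
  fix w assume "w \<in> Poly_Mapping.keys (X + Y)"
  then have "w \<in> Poly_Mapping.keys X \<or> w \<in> Poly_Mapping.keys Y" using keys_add[of X Y] by blast
  then show "\<exists>u. w = Some u \<and> mset (leaves u) = A" using assms unfolding MS_def by blast
qed
lemma MS_sc: "MS A X \<Longrightarrow> MS A (sc c X)"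
  unfolding MS_def by (auto simp: in_keys_iff)
lemma MS_sum: "(\<And>i. i \<in> I \<Longrightarrow> MS A (f i)) \<Longrightarrow> MS A (sum f I)"
  by (induction I rule: infinite_finite_induct) (auto intro: MS_add)
lemma MS_bv: "mset (leaves u) = A \<Longrightarrow> MS A (bv (Some u))"
  by (simp add: MS_def bv_def)

lemma MS_fmul: assumes "MS A X" "MS B Y" shows "MS (A + B) (fmul X Y)"
  unfolding fmul_def single_sc
proof (intro MS_sum MS_sc)
  fix a b assume "a \<in> Poly_Mapping.keys X" "b \<in> Poly_Mapping.keys Y"
  then obtain u v where "a = Some u" "mset (leaves u) = A" "b = Some v" "mset (leaves v) = B"
    using assms unfolding MS_def by blast
  then show "MS (A + B) (bv (bmul a b))" by (simp add: MS_bv)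
qed

lemma MS_eval_tree:
  "length xs = nleaves t \<Longrightarrow> length As = length xs \<Longrightarrow> (\<And>k. k < length xs \<Longrightarrow> MS (As ! k) (xs ! k))
   \<Longrightarrow> MS (sum_list As) (eval_tree fmul t xs)"
proof (induction t arbitrary: xs As)
  case Leaf
  have "length xs = Suc 0" "length As = Suc 0" using Leaf.prems(1,2) by auto
  then obtain x A where "xs = [x]" "As = [A]" by (auto simp: length_Suc_conv)
  then show ?case using Leaf by auto
next
  case (Node l r)
  let ?n = "nleaves l"
  have "MS (sum_list (take ?n As) + sum_list (drop ?n As)) (eval_tree fmul (Node l r) xs)"
    unfolding eval_tree.simps
    by (rule MS_fmul; rule Node.IH) (use Node.prems in auto)
  moreover have "sum_list As = sum_list (take ?n As) + sum_list (drop ?n As)"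
    by (simp only: sum_list_append[symmetric] append_take_drop_id)
  ultimately show ?case by simp
qed

lemma MS_op_eval:
  assumes "p \<in> Mag n" "\<And>i. i \<in> {1..n} \<Longrightarrow> MS (A i) (X i)"
  shows "MS (\<Sum>i\<in>{1..n}. A i) (op_eval fmul p X)"
  unfolding op_eval_def
proof (intro MS_sum MS_sc)
  fix ts assume ts: "ts \<in> Poly_Mapping.keys p"
  then have nl: "nleaves (fst ts) = n" and perm: "snd ts permutes {1..n}"
    using assms(1) by (auto simp: Mag_def mag_basis_def)
  have pi: "inv (snd ts) permutes {1..n}" by (rule permutes_inv[OF perm])
  have "sum_list (map (\<lambda>j. A (inv (snd ts) j)) [1..<n + 1]) = (\<Sum>j\<in>{1..n}. A (inv (snd ts) j))"
    by (metis sum_set_upt_conv_sum_list_nat atLeastLessThanSuc_atLeastAtMost Suc_eq_plus1 set_upt)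
  also have "\<dots> = sum A (inv (snd ts) ` {1..n})"
    by (rule sum.reindex[OF permutes_inj_on[OF pi], symmetric, unfolded o_def])
  also have "\<dots> = (\<Sum>i\<in>{1..n}. A i)"
    by (simp only: permutes_image[OF pi])
  finally have s: "sum_list (map (\<lambda>j. A (inv (snd ts) j)) [1..<n + 1]) = (\<Sum>i\<in>{1..n}. A i)" .
  have "MS (sum_list (map (\<lambda>j. A (inv (snd ts) j)) [1..<n + 1]))
          (eval_tree fmul (fst ts) (map (\<lambda>j. X (inv (snd ts) j)) [1..<nleaves (fst ts) + 1]))"
  proof (rule MS_eval_tree)
    fix k assume "k < length (map (\<lambda>j. X (inv (snd ts) j)) [1..<nleaves (fst ts) + 1])"
    then have k: "k < n" by (simp del: upt_Suc add: nl)
    have "Suc k \<in> {1..n}" using k by simp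
    then have "inv (snd ts) (Suc k) \<in> {1..n}" using permutes_in_image[OF pi, of "Suc k"] by blast
    then have ms: "MS (A (inv (snd ts) (Suc k))) (X (inv (snd ts) (Suc k)))" by (rule assms(2))
    have a1: "map (\<lambda>j. A (inv (snd ts) j)) [1..<n + 1] ! k = A (inv (snd ts) (Suc k))"
      using k by (simp del: upt_Suc)
    have a2: "map (\<lambda>j. X (inv (snd ts) j)) [1..<nleaves (fst ts) + 1] ! k = X (inv (snd ts) (Suc k))"
      using k by (simp del: upt_Suc add: nl)
    show "MS (map (\<lambda>j. A (inv (snd ts) j)) [1..<n + 1] ! k) (map (\<lambda>j. X (inv (snd ts) j)) [1..<nleaves (fst ts) + 1] ! k)"
      unfolding a1 a2 by (rule ms)
  qed (simp_all add: nl)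
  then show "MS (\<Sum>i\<in>{1..n}. A i)
          (eval_tree fmul (fst ts) (map (\<lambda>j. X (inv (snd ts) j)) [1..<nleaves (fst ts) + 1]))"
    by (simp only: s)
qed

lemma MS_fgen: "MS {#a#} (fgen a)" by (simp add: fgen_def MS_bv)

lemma sum_shift: "(\<Sum>j\<in>{1..m}. {#s + j#}) = mset_set {s+1..s+(m::nat)}"
proof (induction m)
  case 0 then show ?case by simp
next
  case (Suc m)
  have "{s+1..s+Suc m} = insert (s + Suc m) {s+1..s+m}" by auto
  then show ?case using Suc by simp
qed

lemma sum_blocks: fixes m :: "nat \<Rightarrow> nat" shows "(\<Sum>i\<in>{1..n}. mset_set {sum m {1..<i} + 1..sum m {1..<i} + m i}) = mset_set {1..sum m {1..(n::nat)}}"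
proof (induction n)
  case 0
  have "sum m {1..0::nat} = 0" by simp
  moreover have "{1..0::nat} = {}" by simp
  ultimately show ?case by (simp only: mset_set.empty sum.empty)
next
  case (Suc n)
  have e: "sum m {1..<Suc n} = sum m {1..n}" by (simp add: atLeastLessThanSuc_atLeastAtMost)
  have un: "{1..sum m {1..Suc n}} = {1..sum m {1..n}} \<union> {sum m {1..n} + 1..sum m {1..n} + m (Suc n)}"
    by auto
  have u: "mset_set {1..sum m {1..Suc n}} = mset_set {1..sum m {1..n}} + mset_set {sum m {1..n} + 1..sum m {1..n} + m (Suc n)}"
    unfolding un by (rule mset_set_Union) auto
  have "(\<Sum>i\<in>{1..Suc n}. mset_set {sum m {1..<i} + 1..sum m {1..<i} + m i})
     = (\<Sum>i\<in>{1..n}. mset_set {sum m {1..<i} + 1..sum m {1..<i} + m i}) + mset_set {sum m {1..<Suc n} + 1..sum m {1..<Suc n} + m (Suc n)}"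
    by (rule sum.cl_ivl_Suc[THEN trans]) simp
  also have "\<dots> = mset_set {1..sum m {1..n}} + mset_set {sum m {1..n} + 1..sum m {1..n} + m (Suc n)}"
    by (simp only: Suc.IH e)
  also have "\<dots> = mset_set {1..sum m {1..Suc n}}" by (rule u[symmetric])
  finally show ?case .
qed

lemma mset_upt: "mset l = mset_set {1..M} \<Longrightarrow> distinct l \<and> set l = {1..M} \<and> length l = M"
proof -
  assume a: "mset l = mset_set {1..M}"
  have s: "set [1..<M+1] = {1..M}" by auto
  have "mset_set (set [1..<M+1]) = mset [1..<M+1]"
    by (rule mset_set_set[OF distinct_upt])
  then have "mset_set {1..M} = mset [1..<M+1]" by (simp only: s)
  with a have b: "mset l = mset [1..<M+1]" by (rule trans)
  have d: "distinct [1..<M+1]" by (rule distinct_upt)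
  have len: "length [1..<M+1] = M" by (rule trans[OF length_upt]) simp
  show ?thesis
    using mset_eq_imp_distinct_iff[OF b] mset_eq_setD[OF b] mset_eq_length[OF b] s d len
    by simp
qed




lemma nleaves_shape: "nleaves (shape u) = length (leaves u)"
  by (induction u) auto

lemma eval_shape: "eval_tree fmul (shape u) (map fgen (leaves u)) = bv (Some u)"
  by (induction u) (auto simp: nleaves_shape fgen_def)

lemma to_op_lin: "to_op C = lin_ext (\<lambda>w. case w of None \<Rightarrow> 0 | Some u \<Rightarrow> bv (op_of_word u)) C"
  unfolding to_op_def lin_ext_def
  by (rule sum.cong[OF refl]) (auto split: option.split simp: single_sc)

lemma op_eval_lin: "op_eval m p x = lin_ext (\<lambda>ts. eval_tree m (fst ts) (map (\<lambda>j. x (inv (snd ts) j)) [1..<nleaves (fst ts)+1])) p"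
  by (simp add: op_eval_def lin_ext_def)

lemma keys_sum_sub: "Poly_Mapping.keys (sum f I) \<subseteq> (\<Union>i\<in>I. Poly_Mapping.keys (f i))"
proof (induction I rule: infinite_finite_induct)
  case (insert x F)
  have "Poly_Mapping.keys (f x + sum f F) \<subseteq> Poly_Mapping.keys (f x) \<union> Poly_Mapping.keys (sum f F)"
    by (rule keys_add)
  then show ?case using insert by auto
qed auto

lemma keys_lin_ext: "Poly_Mapping.keys (lin_ext g C) \<subseteq> (\<Union>w\<in>Poly_Mapping.keys C. Poly_Mapping.keys (g w))"
proof
  fix k assume k: "k \<in> Poly_Mapping.keys (lin_ext g C)"
  have sub: "Poly_Mapping.keys (lin_ext g C) \<subseteq> (\<Union>w\<in>Poly_Mapping.keys C. Poly_Mapping.keys (sc (Poly_Mapping.lookup C w) (g w)))"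
    unfolding lin_ext_def by (rule keys_sum_sub)
  have "\<And>w. Poly_Mapping.keys (sc (Poly_Mapping.lookup C w) (g w)) \<subseteq> Poly_Mapping.keys (g w)"
    by (auto simp: in_keys_iff)
  then have "(\<Union>w\<in>Poly_Mapping.keys C. Poly_Mapping.keys (sc (Poly_Mapping.lookup C w) (g w))) \<subseteq> (\<Union>w\<in>Poly_Mapping.keys C. Poly_Mapping.keys (g w))"
    by (rule UN_mono[OF subset_refl])
  then show "k \<in> (\<Union>w\<in>Poly_Mapping.keys C. Poly_Mapping.keys (g w))" using sub k by (rule subsetD[OF _ subsetD])
qed

lemma word_perm:
  assumes d: "distinct l" and s: "set l = {1..M}" and len: "length l = M"
  defines "f \<equiv> (\<lambda>j. if j \<in> {1..length l} then l ! (j - 1) else j)"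
  shows "f permutes {1..M}" "map f [1..<M+1] = l"
proof -
  have inj: "inj_on f {1..M}"
  proof (rule inj_onI)
    fix i j assume i: "i \<in> {1..M}" and j: "j \<in> {1..M}" and e: "f i = f j"
    then have "l ! (i - 1) = l ! (j - 1)" by (simp add: f_def len)
    then have "i - 1 = j - 1" using nth_eq_iff_index_eq[OF d, of "i-1" "j-1"] i j len by auto
    then show "i = j" using i j by auto
  qed
  have img: "f ` {1..M} = {1..M}"
  proof
    show "f ` {1..M} \<subseteq> {1..M}"
    proof
      fix y assume "y \<in> f ` {1..M}"
      then obtain i where i: "i \<in> {1..M}" "y = f i" by blast
      then have "y = l ! (i - 1)" by (simp add: f_def len)
      then have "y \<in> set l" using i len by auto
      then show "y \<in> {1..M}" using s by simp
    qed
  next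
    show "{1..M} \<subseteq> f ` {1..M}"
    proof
      fix y assume "y \<in> {1..M}"
      then have "y \<in> set l" using s by simp
      then obtain k where k: "k < M" "l ! k = y" using len by (auto simp: in_set_conv_nth)
      then have "f (k + 1) = y" by (simp add: f_def len)
      moreover have "k + 1 \<in> {1..M}" using k by simp
      ultimately show "y \<in> f ` {1..M}" by blast
    qed
  qed
  show "f permutes {1..M}"
  proof (rule bij_imp_permutes)
    show "bij_betw f {1..M} {1..M}" using inj img by (simp add: bij_betw_def)
  next
    fix x assume "x \<notin> {1..M}" then show "f x = x" unfolding f_def len by presburger
  qed
  show "map f [1..<M+1] = l"
  proof (rule nth_equalityI)
    show "length (map f [1..<M+1]) = length l" by (simp del: upt_Suc add: len)
  next
    fix i assume "i < length (map f [1..<M+1])"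
    then have i: "i < M" by (simp del: upt_Suc)
    then have "[1..<M+1] ! i = Suc i" by (simp del: upt_Suc)
    moreover have "f (Suc i) = l ! i" using i by (simp add: f_def len)
    ultimately show "map f [1..<M+1] ! i = l ! i" using i by (simp del: upt_Suc)
  qed
qed

lemma op_of_word_good:
  assumes "mset (leaves u) = mset_set {1..M}"
  shows "op_of_word u \<in> mag_basis M"
    "eval_tree fmul (fst (op_of_word u)) (map (\<lambda>j. fgen (inv (snd (op_of_word u)) j)) [1..<nleaves (fst (op_of_word u))+1]) = bv (Some u)"
proof -
  let ?l = "leaves u"
  define f where "f \<equiv> (\<lambda>j. if j \<in> {1..length ?l} then ?l ! (j - 1) else j)"
  have l: "distinct ?l" "set ?l = {1..M}" "length ?l = M" using mset_upt[OF assms] by auto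
  have fp: "f permutes {1..M}" unfolding f_def by (rule word_perm(1)[OF l])
  have fm: "map f [1..<M+1] = ?l" unfolding f_def by (rule word_perm(2)[OF l])
  have ow: "op_of_word u = (shape u, inv f)" by (simp add: op_of_word_def f_def)
  show "op_of_word u \<in> mag_basis M"
    using ow permutes_inv[OF fp] by (simp add: mag_basis_def nleaves_shape l)
  have ii: "inv (inv f) = f" by (rule inv_inv_eq[OF permutes_bij[OF fp]])
  have "map (\<lambda>j. fgen (f j)) [1..<M+1] = map fgen (map f [1..<M+1])" by (simp del: upt_Suc)
  also have "\<dots> = map fgen ?l" by (simp only: fm)
  finally have mm: "map (\<lambda>j. fgen (f j)) [1..<M+1] = map fgen ?l" .
  have "fst (op_of_word u) = shape u" "snd (op_of_word u) = inv f" by (simp_all add: ow)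
  then show "eval_tree fmul (fst (op_of_word u)) (map (\<lambda>j. fgen (inv (snd (op_of_word u)) j)) [1..<nleaves (fst (op_of_word u))+1]) = bv (Some u)"
    by (simp only: ii nleaves_shape l(3) mm eval_shape)
qed

lemma to_op_good:
  fixes C :: "nat bt option \<Rightarrow>\<^sub>0 'k::field"
  assumes "MS (mset_set {1..M}) C"
  shows "to_op C \<in> Mag M" "op_eval fmul (to_op C) fgen = C"
proof -
  let ?g = "\<lambda>w. case w of None \<Rightarrow> (0 :: (tree \<times> (nat \<Rightarrow> nat)) \<Rightarrow>\<^sub>0 'k) | Some u \<Rightarrow> bv (op_of_word u)"
  have "Poly_Mapping.keys (to_op C) \<subseteq> mag_basis M"
  proof
    fix k assume k: "k \<in> Poly_Mapping.keys (to_op C)"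
    have kk: "k \<in> Poly_Mapping.keys (lin_ext ?g C)" using k by (simp only: to_op_lin)
    have "k \<in> (\<Union>w\<in>Poly_Mapping.keys C. Poly_Mapping.keys (?g w))"
      using keys_lin_ext[of ?g C] kk by (rule subsetD)
    then obtain w where w: "w \<in> Poly_Mapping.keys C" "k \<in> Poly_Mapping.keys (?g w)" by (rule UN_E)
    then obtain u where u: "w = Some u" "mset (leaves u) = mset_set {1..M}" using assms unfolding MS_def by blast
    then have "k \<in> Poly_Mapping.keys (bv (op_of_word u) :: _ \<Rightarrow>\<^sub>0 'k)" using w(2) by simp
    then have "k = op_of_word u" by (simp add: bv_def)
    then show "k \<in> mag_basis M" using op_of_word_good(1)[OF u(2)] by simp
  qed
  then show "to_op C \<in> Mag M" by (simp add: Mag_def)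
  have "op_eval fmul (to_op C) fgen = lin_ext bv C"
    unfolding op_eval_lin to_op_lin lin_ext_comp
  proof (rule lin_ext_cong)
    fix w assume "w \<in> Poly_Mapping.keys C"
    then obtain u where u: "w = Some u" "mset (leaves u) = mset_set {1..M}" using assms unfolding MS_def by blast
    show "lin_ext (\<lambda>ts. eval_tree fmul (fst ts) (map (\<lambda>j. fgen (inv (snd ts) j)) [1..<nleaves (fst ts) + 1])) (?g w) = bv w"
      unfolding u(1) option.case lin_ext_bv by (rule op_of_word_good(2)[OF u(2)])
  qed
  then show "op_eval fmul (to_op C) fgen = C" by simp
qed




lemma counit_tensor:
  assumes e: "is_linear_form e"
  shows "lin_ext (\<lambda>ab. sc (e (bv (fst ab))) (bv (snd ab))) (tensor A B) = sc (e A) B"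
proof (rule bilin_unique[where f="\<lambda>A B. lin_ext (\<lambda>ab. sc (e (bv (fst ab))) (bv (snd ab))) (tensor A B)"
      and g="\<lambda>A B. sc (e A) B"])
  show "is_linear (\<lambda>A. sc (e A) B)" for B
    using e by (simp add: is_linear_def is_linear_form_def sc_add2)
  show "is_linear (sc (e A))" for A
    by (simp add: is_linear_def mult.commute)
qed (auto intro!: linear_comp[OF lin_ext_linear tensor_lin1] linear_comp[OF lin_ext_linear tensor_lin2])

lemma sc_eq_zero: "sc c (v :: _ \<Rightarrow>\<^sub>0 'k::field) = 0 \<Longrightarrow> v \<noteq> 0 \<Longrightarrow> c = 0"
proof -
  assume a: "sc c v = 0" "v \<noteq> 0"
  then obtain k where "Poly_Mapping.lookup v k \<noteq> 0" by (metis poly_mapping_eqI lookup_zero)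
  moreover have "c * Poly_Mapping.lookup v k = 0" using a(1) by (metis lookup_sc lookup_zero)
  ultimately show "c = 0" by simp
qed

lemma sc_eq_one: "v = sc c (v :: _ \<Rightarrow>\<^sub>0 'k::field) \<Longrightarrow> v \<noteq> 0 \<Longrightarrow> c = 1"
proof -
  assume a: "v = sc c v" "v \<noteq> 0"
  then obtain k where k: "Poly_Mapping.lookup v k \<noteq> 0" by (metis poly_mapping_eqI lookup_zero)
  have "Poly_Mapping.lookup v k = c * Poly_Mapping.lookup v k" using a(1) by (metis lookup_sc)
  then show "c = 1" using k by simp
qed

lemma prim_counit:
  assumes H: "asc_mag_bialgebra mu one D e" and y: "D y = tensor y one + tensor one y"
  shows "e y = 0"
proof -
  have bil: "is_bilinear mu" and ul: "\<And>x. mu one x = x" and e: "is_linear_form e"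
    and cu: "counital D e" and Done: "D one = tensor one one"
    using H by (auto simp: asc_mag_bialgebra_def)
  let ?h = "\<lambda>ab. sc (e (bv (fst ab))) (bv (snd ab))"
  have one_nz: "one \<noteq> 0"
  proof
    assume "one = 0"
    then have "bv undefined = mu 0 (bv undefined)" using ul by simp
    also have "\<dots> = 0" by (rule linear_zero[OF bil_lin1[OF bil]])
    finally show False by simp
  qed
  have "one = lin_ext ?h (D one)" using cu by (simp add: counital_def)
  also have "\<dots> = sc (e one) one" by (simp add: Done counit_tensor[OF e])
  finally have "one = sc (e one) one" .
  then have e1: "e one = 1" using sc_eq_one one_nz by metis
  have "y = lin_ext ?h (D y)" using cu by (simp add: counital_def)
  also have "\<dots> = sc (e y) one + y" by (simp add: y counit_tensor[OF e] e1)
  finally have "sc (e y) one = 0" by (metis add_cancel_right_left)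
  then show ?thesis using sc_eq_zero one_nz by blast
qed


lemma mag_id_prim: "mag_id \<in> (PrimMag 1 :: ((tree \<times> (nat \<Rightarrow> nat)) \<Rightarrow>\<^sub>0 'k::field) set)"
proof -
  have k: "Poly_Mapping.keys (mag_id :: (tree \<times> (nat \<Rightarrow> nat)) \<Rightarrow>\<^sub>0 'k) = {(Leaf, id)}"
    by (simp add: mag_id_def bv_def)
  have "(Leaf, id) \<in> mag_basis 1" by (simp add: mag_basis_def permutes_id)
  then have M: "(mag_id :: (tree \<times> (nat \<Rightarrow> nat)) \<Rightarrow>\<^sub>0 'k) \<in> Mag 1" by (simp add: Mag_def k)
  have ev: "op_eval fmul (mag_id :: (tree \<times> (nat \<Rightarrow> nat)) \<Rightarrow>\<^sub>0 'k) fgen = fgen 1"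
    by (simp add: op_eval_def k mag_id_def bv_def)
  have c: "fcounit (fgen 1 :: nat bt option \<Rightarrow>\<^sub>0 'k) = 0"
    by (simp add: fcounit_def fgen_def bv_def lookup_single)
  have "is_prim fcop fcounit fone (fgen 1 :: nat bt option \<Rightarrow>\<^sub>0 'k)"
    unfolding is_prim_def by (rule conjI[OF c fcop_fgen])
  then show ?thesis using M ev by (simp add: PrimMag_def)
qed

theorem corollary1p4:
  fixes dummy_k :: "'k::field" and dummy_b :: "'b"
  shows "(mag_id \<in> (PrimMag 1 :: ((tree \<times> (nat \<Rightarrow> nat)) \<Rightarrow>\<^sub>0 'k) set) \<and>
          (\<forall>n (p :: (tree \<times> (nat \<Rightarrow> nat)) \<Rightarrow>\<^sub>0 'k) m q.
             n \<ge> 1 \<longrightarrow> p \<in> PrimMag n \<longrightarrow>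
             (\<forall>i\<in>{1..n}. m i \<ge> 1 \<and> q i \<in> PrimMag (m i)) \<longrightarrow>
             mag_comp p m q \<in> PrimMag (\<Sum>i=1..n. m i)))
       \<and> (\<forall>(mu :: ('b \<Rightarrow>\<^sub>0 'k) \<Rightarrow> ('b \<Rightarrow>\<^sub>0 'k) \<Rightarrow> ('b \<Rightarrow>\<^sub>0 'k)) one D e n
             (p :: (tree \<times> (nat \<Rightarrow> nat)) \<Rightarrow>\<^sub>0 'k) x.
             asc_mag_bialgebra mu one D e \<longrightarrow> n \<ge> 1 \<longrightarrow> p \<in> PrimMag n \<longrightarrow>
             (\<forall>i\<in>{1..n}. is_prim D e one (x i)) \<longrightarrow>
             is_prim D e one (op_eval mu p x))"
proof (intro conjI allI impI)
  show "mag_id \<in> (PrimMag 1 :: ((tree \<times> (nat \<Rightarrow> nat)) \<Rightarrow>\<^sub>0 'k) set)" by (rule mag_id_prim)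
next
  fix n :: nat and p :: "(tree \<times> (nat \<Rightarrow> nat)) \<Rightarrow>\<^sub>0 'k" and m :: "nat \<Rightarrow> nat"
    and q :: "nat \<Rightarrow> (tree \<times> (nat \<Rightarrow> nat)) \<Rightarrow>\<^sub>0 'k"
  assume pP: "p \<in> PrimMag n" and qP: "\<forall>i\<in>{1..n}. m i \<ge> 1 \<and> q i \<in> PrimMag (m i)"
  define s where "s i = sum m {1..<i}" for i
  define Q :: "nat \<Rightarrow> nat bt option \<Rightarrow>\<^sub>0 'k" where "Q i = op_eval fmul (q i) (\<lambda>j. fgen (s i + j))" for i
  define C where "C = op_eval fmul p Q"
  have Qe: "Q = (\<lambda>i. op_eval fmul (q i) (\<lambda>j. fgen (sum m {1..<i} + j)))"
    by (simp add: fun_eq_iff Q_def s_def)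
  have mc: "mag_comp p m q = to_op C" unfolding mag_comp_def C_def Qe ..
  have pM: "p \<in> Mag n" and pprim: "fcop (op_eval fmul p fgen) = tensor (op_eval fmul p fgen) fone + tensor fone (op_eval fmul p fgen)"
    using pP by (auto simp: PrimMag_def is_prim_def)
  have qM: "q i \<in> Mag (m i)" and qprim: "fcop (op_eval fmul (q i) fgen) = tensor (op_eval fmul (q i) fgen) fone + tensor fone (op_eval fmul (q i) fgen)"
    if "i \<in> {1..n}" for i
    using qP that by (auto simp: PrimMag_def is_prim_def)
  have Qprim: "fcop (Q i) = tensor (Q i) fone + tensor fone (Q i)" if "i \<in> {1..n}" for i
    unfolding Q_def by (rule F.G[OF qM[OF that] qprim[OF that]]) (rule fcop_fgen)
  have Cprim: "fcop C = tensor C fone + tensor fone C"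
    unfolding C_def by (rule F.G[OF pM pprim Qprim])
  have QMS: "MS (mset_set {s i + 1..s i + m i}) (Q i)" if "i \<in> {1..n}" for i
  proof -
    have "MS (\<Sum>j\<in>{1..m i}. {#s i + j#}) (Q i)"
      unfolding Q_def by (rule MS_op_eval[OF qM[OF that]]) (rule MS_fgen)
    then show ?thesis by (simp only: sum_shift)
  qed
  have "MS (\<Sum>i\<in>{1..n}. mset_set {s i + 1..s i + m i}) C"
    unfolding C_def by (rule MS_op_eval[OF pM QMS])
  then have CMS: "MS (mset_set {1..sum m {1..n}}) C"
    unfolding s_def by (simp only: sum_blocks)
  have c0: "fcounit C = 0"
  proof -
    have "None \<notin> Poly_Mapping.keys C" using CMS by (auto simp: MS_def)
    then show ?thesis by (simp add: fcounit_def in_keys_iff)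
  qed
  show "mag_comp p m q \<in> PrimMag (\<Sum>i = 1..n. m i)"
    unfolding mc PrimMag_def
    using to_op_good[OF CMS] Cprim c0 by (simp add: is_prim_def)
next
  fix mu :: "('b \<Rightarrow>\<^sub>0 'k) \<Rightarrow> ('b \<Rightarrow>\<^sub>0 'k) \<Rightarrow> ('b \<Rightarrow>\<^sub>0 'k)" and one D e n
    and p :: "(tree \<times> (nat \<Rightarrow> nat)) \<Rightarrow>\<^sub>0 'k" and x
  assume H: "asc_mag_bialgebra mu one D e" and pP: "p \<in> PrimMag n"
    and xP: "\<forall>i\<in>{1..n}. is_prim D e one (x i)"
  interpret hb mu one D
    using H by unfold_locales (auto simp: asc_mag_bialgebra_def)
  have pM: "p \<in> Mag n" and pprim: "fcop (op_eval fmul p fgen) = tensor (op_eval fmul p fgen) fone + tensor fone (op_eval fmul p fgen)"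
    using pP by (auto simp: PrimMag_def is_prim_def)
  have D: "D (op_eval mu p x) = tensor (op_eval mu p x) one + tensor one (op_eval mu p x)"
    by (rule G[OF pM pprim]) (use xP in \<open>auto simp: is_prim_def\<close>)
  show "is_prim D e one (op_eval mu p x)"
    unfolding is_prim_def using D prim_counit[OF H D] by simp
qed


end
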